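(* Let $v_1\ge v_2>0$, $m\in\mathbb{Z}_{\ge1}$ and $0<b\le m$. Let $(X,Y)$ be a strategy profile with $\mathbf{E}(X)=m$ and $\mathbf{E}(Y)=b$ such that: $m=v_2/2$; $(X,Y)$ is a Nash equilibrium of the General Lotto game $\Gamma(m,b)$; $X=U_{\mathrm{O}}^m$; and $Y=\left(1-\frac bm\right)\delta_0+\frac bm Z$ where (a) if $m=1$: $Z=\lambda_{\mathrm{O}}U_{\mathrm{O}}^1+\lambda_{\mathrm{E}}U_{\mathrm{E}}^1$ with $\lambda_{\mathrm{O}},\lambda_{\mathrm{E}}\ge0$, $\lambda_{\mathrm{O}}+\lambda_{\mathrm{E}}=1$, $\frac{\lambda_{\mathrm{E}}}{2}\ge1-\frac{2}{bv_1}$ and $\frac{\lambda_{\mathrm{E}}}{2}\le\frac1b-\frac{2}{bv_1}$; (b) if $m\ge2$: $Z=\lambda_{\mathrm{O}}U_{\mathrm{O}}^m+\lambda_{\mathrm{E}}U_{\mathrm{E}}^m+\lambda_{\mathrm{O}\uparrow1}U_{\mathrm{O}\uparrow1}^m+\sum_{j=1}^{m-1}\lambda_jW_j^m$ with $\lambda_{\mathrm{O}},\lambda_{\mathrm{E}},\lambda_{\mathrm{O}\uparrow1},\lambda_1,\dots,\lambda_{m-1}\ge0$, $\lambda_{\mathrm{O}}+\lambda_{\mathrm{E}}+\lambda_{\mathrm{O}\uparrow1}+\sum_{j=1}^{m-1}\lambda_j=1$, $\frac{\lambda_{\mathrm{E}}}{m+1}+\frac{1}{2m}\sum_{j=1}^{m-1}\lambda_j\le\frac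 mb\left(1-\frac{v_2}{v_1}\right)$, $\frac{\lambda_{\mathrm{O}}}{m}+\frac{\lambda_{\mathrm{E}}}{m+1}+\frac{\lambda_{\mathrm{O}\uparrow1}}{m-1}+\frac{1}{m}\sum_{j=1}^{m-1}\lambda_j=\frac{2m}{bv_1}$, and, in the case $b>m-1$, $\frac{1}{2m}\sum_{j=1}^{m-1}\lambda_j+\frac{\lambda_{\mathrm{O}\uparrow1}}{m-1}\le\frac{m-b}{b}$. Then $(X,Y)$ is a Nash equilibrium of the discrete all-pay auction with valuations $v_1,v_2$.
   Context: Discrete all-pay auction: two players, 1 and 2, value a prize at $v_1$ and $v_2$ respectively, where $v_1\ge v_2>0$. A (mixed) strategy is a probability distribution on $\mathbb{Z}_{\ge 0}$ with finite mean, identified with a $\mathbb{Z}_{\ge0}$-valued random variable; the two players' choices are independent. If player 1 uses $X$ and player 2 uses $Y$, the expected payoffs are $P^1(X,Y)=v_1\Pr(X>Y)+\frac{v_1}{2}\Pr(X=Y)-\mathbf{E}(X)$ and $P^2(Y,X)=v_2\Pr(Y>X)+\frac{v_2}{2}\Pr(X=Y)-\mathbf{E}(Y)$. A Nash equilibrium of the all-pay auction is a pair $(X,Y)$ with $P^1(X,Y)\ge P^1(X',Y)$ and $P^2(Y,X)\ge P^2(Y',X)$ for all strategies $X',Y'$. $\delta_j$ denotes the point mass at $j$; $\lambda A+(1-\lambda)B$ denotes the mixture of distributions $A$ and $B$ (similarly for longer convex combinations). Discrete General Lotto game: for reals $a,b\ge 0$, in $\Gamma(a,b)$ player 1 chooses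 a distribution $X$ on $\mathbb{Z}_{\ge0}$ with $\mathbf{E}(X)=a$ and player 2 chooses a distribution $Y$ on $\mathbb{Z}_{\ge 0}$ with $\mathbf{E}(Y)=b$ (independently); the payoff to player 1 is $H(X,Y)=\Pr(X>Y)-\Pr(X<Y)$ and to player 2 is $H(Y,X)=-H(X,Y)$. A Nash equilibrium of $\Gamma(a,b)$ is a pair $(X,Y)$ from these strategy sets such that neither player can increase her payoff by switching to another strategy in her own strategy set. Special distributions: for $m\ge1$, $U_{\mathrm{O}}^m$ is the uniform distribution on $\{1,3,\dots,2m-1\}$; for $m\ge0$, $U_{\mathrm{E}}^m$ is the uniform distribution on $\{0,2,\dots,2m\}$; for $m\ge2$, $U_{\mathrm{O}\uparrow1}^m$ is the uniform distribution on $\{2,4,\dots,2m-2\}$; for $m\ge2$ and $1\le j\le m-1$, $W_j^m=\frac{1}{2m}\delta_0+\sum_{i=1}^{j-1}\frac1m\delta_{2i}+\frac{1}{2m}\delta_{2j}+\sum_{i=j+1}^{m}\frac1m\delta_{2i-1}$. *)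

theory Defs
  imports "HOL-Probability.Probability"
begin

definition strategy :: "nat pmf \<Rightarrow> bool" where
  "strategy p \<longleftrightarrow> integrable (measure_pmf p) (real :: nat \<Rightarrow> real)"

definition mean :: "nat pmf \<Rightarrow> real" where
  "mean p = measure_pmf.expectation p (real :: nat \<Rightarrow> real)"

definition prob_gt :: "nat pmf \<Rightarrow> nat pmf \<Rightarrow> real" where
  "prob_gt X Y = measure_pmf.prob (pair_pmf X Y) {(x, y). y < x}"

definition prob_eq :: "nat pmf \<Rightarrow> nat pmf \<Rightarrow> real" where
  "prob_eq X Y = measure_pmf.prob (pair_pmf X Y) {(x, y). x = y}"

definition allpay_payoff :: "real \<Rightarrow> nat pmf \<Rightarrow> nat pmf \<Rightarrow> real" where
  "allpay_payoff v X Y = v * prob_gt X Y + v / 2 * prob_eq X Y - mean X"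

definition allpay_NE :: "real \<Rightarrow> real \<Rightarrow> nat pmf \<Rightarrow> nat pmf \<Rightarrow> bool" where
  "allpay_NE v1 v2 X Y \<longleftrightarrow> strategy X \<and> strategy Y \<and>
     (\<forall>X'. strategy X' \<longrightarrow> allpay_payoff v1 X' Y \<le> allpay_payoff v1 X Y) \<and>
     (\<forall>Y'. strategy Y' \<longrightarrow> allpay_payoff v2 Y' X \<le> allpay_payoff v2 Y X)"

definition lotto_H :: "nat pmf \<Rightarrow> nat pmf \<Rightarrow> real" where
  "lotto_H X Y = prob_gt X Y - prob_gt Y X"

definition lotto_NE :: "real \<Rightarrow> real \<Rightarrow> nat pmf \<Rightarrow> nat pmf \<Rightarrow> bool" where
  "lotto_NE a b X Y \<longleftrightarrow>
     strategy X \<and> mean X = a \<and> strategy Y \<and> mean Y = b \<and>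
     (\<forall>X'. strategy X' \<and> mean X' = a \<longrightarrow> lotto_H X' Y \<le> lotto_H X Y) \<and>
     (\<forall>Y'. strategy Y' \<and> mean Y' = b \<longrightarrow> lotto_H Y' X \<le> lotto_H Y X)"

definition U_O :: "nat \<Rightarrow> nat pmf" where
  "U_O m = pmf_of_set ((\<lambda>i. 2 * i + 1) ` {..<m})"

definition U_E :: "nat \<Rightarrow> nat pmf" where
  "U_E m = pmf_of_set ((\<lambda>i. 2 * i) ` {..m})"

definition U_O_up1 :: "nat \<Rightarrow> nat pmf" where
  "U_O_up1 m = pmf_of_set ((\<lambda>i. 2 * i) ` {1..m-1})"

text \<open>Mass function of W_j^m (for m \<ge> 2, 1 \<le> j \<le> m-1).\<close>
definition W_mass :: "nat \<Rightarrow> nat \<Rightarrow> nat \<Rightarrow> real" where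
  "W_mass j m k =
     (if k = 0 then 1 / (2 * real m)
      else if (\<exists>i. 1 \<le> i \<and> i \<le> j - 1 \<and> k = 2 * i) then 1 / real m
      else if k = 2 * j then 1 / (2 * real m)
      else if (\<exists>i. j + 1 \<le> i \<and> i \<le> m \<and> k = 2 * i - 1) then 1 / real m
      else 0)"

definition W :: "nat \<Rightarrow> nat \<Rightarrow> nat pmf" where
  "W j m = embed_pmf (\<lambda>k. W_mass j m k)"

end

theory Submission
  imports Defs
begin

lemma emeas_pair: "emeasure (measure_pmf (pair_pmf A B)) S = (\<integral>\<^sup>+a. emeasure (measure_pmf B) {b. (a,b) \<in> S} \<partial>measure_pmf A)"
proof -
  have "emeasure (measure_pmf (pair_pmf A B)) S = (\<integral>\<^sup>+a. \<integral>\<^sup>+b. indicator S (a,b) \<partial>measure_pmf B \<partial>measure_pmf A)"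
    using nn_integral_pair_pmf'[where f="indicator S" and A=A and B=B] by simp
  also have "\<dots> = (\<integral>\<^sup>+a. emeasure (measure_pmf B) {b. (a,b) \<in> S} \<partial>measure_pmf A)"
    apply (rule nn_integral_cong)
    apply (subst nn_integral_indicator[symmetric])
    apply simp
    apply (rule nn_integral_cong) by (auto split: split_indicator)
  finally show ?thesis .
qed

lemma prob_pair: "measure_pmf.prob (pair_pmf A B) S = measure_pmf.expectation A (\<lambda>a. measure_pmf.prob B {b. (a,b) \<in> S})"
proof -
  have "ennreal (measure_pmf.prob (pair_pmf A B) S) = (\<integral>\<^sup>+a. ennreal (measure_pmf.prob B {b. (a,b) \<in> S}) \<partial>measure_pmf A)"
    using emeas_pair[of A B S] by (simp add: measure_pmf.emeasure_eq_measure)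
  also have "\<dots> = ennreal (measure_pmf.expectation A (\<lambda>a. measure_pmf.prob B {b. (a,b) \<in> S}))"
    by (rule nn_integral_eq_integral) (auto intro!: measure_pmf.integrable_const_bound[where B=1])
  finally show ?thesis by (simp add: integral_nonneg_AE)
qed

definition TT :: "(nat \<Rightarrow> nat) \<Rightarrow> nat \<Rightarrow> nat" where
  "TT c x = 2 * (\<Sum>k<x. c k) + c x"

lemma TT_0: "TT c 0 = c 0" by (simp add: TT_def)
lemma TT_Suc: "TT c (Suc x) = TT c x + c x + c (Suc x)" by (simp add: TT_def)

definition cO :: "nat \<Rightarrow> nat \<Rightarrow> nat" where "cO m k = (if odd k \<and> k < 2*m then 1 else 0)"
definition cE :: "nat \<Rightarrow> nat \<Rightarrow> nat" where "cE m k = (if even k \<and> k \<le> 2*m then 1 else 0)"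
definition cU :: "nat \<Rightarrow> nat \<Rightarrow> nat" where "cU m k = (if even k \<and> 2 \<le> k \<and> k \<le> 2*m-2 then 1 else 0)"
definition cZ :: "nat \<Rightarrow> nat" where "cZ k = (if k = 0 then 1 else 0)"
definition cW :: "nat \<Rightarrow> nat \<Rightarrow> nat \<Rightarrow> nat" where
  "cW j m k = (if k = 0 then 1 else if even k \<and> k < 2*j then 2 else if k = 2*j then 1
      else if odd k \<and> 2*j < k \<and> k < 2*m then 2 else 0)"

lemma TT_O_pair: shows "cO m x + cO m (Suc x) = (if Suc x \<le> 2*m then 1 else 0)"
  unfolding cO_def by presburger

lemma TT_O: shows "TT (cO m) x = (if x \<le> 2*m then x else 2*m)"
proof (induction x)
  case 0 show ?case by (simp add: TT_0 cO_def)
next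
  case (Suc x)
  show ?case unfolding TT_Suc Suc.IH add.assoc TT_O_pair by auto
qed

lemma TT_E_pair: shows "cE m x + cE m (Suc x) = (if x \<le> 2*m then 1 else 0)"
  unfolding cE_def by presburger

lemma TT_E: shows "TT (cE m) x = (if x \<le> 2*m+1 then x+1 else 2*m+2)"
proof (induction x)
  case 0 show ?case by (simp add: TT_0 cE_def)
next
  case (Suc x)
  show ?case unfolding TT_Suc Suc.IH add.assoc TT_E_pair by auto
qed

lemma TT_U_pair: assumes "m \<ge> 2" shows "cU m x + cU m (Suc x) = (if 1 \<le> x \<and> x \<le> 2*m-2 then 1 else 0)"
  using assms unfolding cU_def by presburger

lemma TT_U: assumes "m \<ge> 2" shows "TT (cU m) x = (if x = 0 then 0 else if x \<le> 2*m-1 then x-1 else 2*m-2)"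
proof (induction x)
  case 0 show ?case using assms by (simp add: TT_0 cU_def)
next
  case (Suc x)
  show ?case unfolding TT_Suc Suc.IH add.assoc TT_U_pair[OF assms] using assms by auto
qed

lemma TT_Z_pair: shows "cZ x + cZ (Suc x) = (if x = 0 then 1 else 0)"
  unfolding cZ_def by presburger

lemma TT_Z: shows "TT cZ x = (if x = 0 then 1 else 2)"
proof (induction x)
  case 0 show ?case by (simp add: TT_0 cZ_def)
next
  case (Suc x)
  show ?case unfolding TT_Suc Suc.IH add.assoc TT_Z_pair by auto
qed

lemma TT_W_pair: assumes "1 \<le> j" "j + 1 \<le> m" shows "cW j m x + cW j m (Suc x) = (if x = 0 then 1 else if Suc x = 2*j then 1 else if x = 2*j then 3 else if Suc x \<le> 2*m then 2 else 0)"
proof (cases "even x")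
  case True
  then obtain t where t: "x = 2*t" by (auto elim: evenE)
  have o: "odd (Suc (2*t))" by simp
  show ?thesis unfolding cW_def t using assms o by (auto; presburger)
next
  case False
  then obtain t where t: "x = 2*t+1" by (auto elim: oddE)
  have o: "even (Suc (2*t+1))" by simp
  show ?thesis unfolding cW_def t using assms o by auto
qed

lemma TT_W: assumes "1 \<le> j" "j + 1 \<le> m" shows "TT (cW j m) x = (if x = 0 then 1 else if x = 2*j then 2*x-1 else if x \<le> 2*m then 2*x else 4*m)"
proof (induction x)
  case 0 show ?case using assms by (simp add: TT_0 cW_def)
next
  case (Suc x)
  show ?case unfolding TT_Suc Suc.IH add.assoc TT_W_pair[OF assms] using assms by auto
qed

definition mc :: "(nat \<Rightarrow> real) \<Rightarrow> nat \<Rightarrow> real" where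
  "mc f x = (\<Sum>k<x. f k) + f x / 2"

lemma mc_nat: "mc (\<lambda>k. real (c k) / D) x = real (TT c x) / (2*D)"
proof -
  have "(\<Sum>k<x. real (c k) / D) = real (\<Sum>k<x. c k) / D"
    by (simp add: sum_divide_distrib)
  then show ?thesis unfolding mc_def TT_def by (cases "D = 0") (simp_all add: field_simps)
qed

lemma mc_add: "mc (\<lambda>k. f k + g k) x = mc f x + mc g x"
  unfolding mc_def by (simp add: sum.distrib)
lemma mc_cmult: "mc (\<lambda>k. a * f k) x = a * mc f x"
  unfolding mc_def by (simp add: sum_distrib_left algebra_simps)
lemma mc_sum: "mc (\<lambda>k. \<Sum>j\<in>J. h j k) x = (\<Sum>j\<in>J. mc (h j) x)"
  unfolding mc_def by (simp add: sum.swap[of _ J] sum.distrib sum_divide_distrib)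

lemma mem_O: "(k::nat) \<in> (\<lambda>i. 2 * i + 1) ` {..<m} \<longleftrightarrow> odd k \<and> k < 2*m"
proof
  assume "odd k \<and> k < 2*m"
  then obtain t where "k = 2*t+1" "t < m" by (auto elim!: oddE)
  then show "k \<in> (\<lambda>i. 2 * i + 1) ` {..<m}" by auto
qed auto
lemma mem_E: "(k::nat) \<in> (\<lambda>i. 2 * i) ` {..m} \<longleftrightarrow> even k \<and> k \<le> 2*m"
proof
  assume "even k \<and> k \<le> 2*m"
  then obtain t where "k = 2*t" "t \<le> m" by (auto elim!: evenE)
  then show "k \<in> (\<lambda>i. 2 * i) ` {..m}" by auto
qed auto
lemma mem_U: "(k::nat) \<in> (\<lambda>i. 2 * i) ` {1..m-1} \<longleftrightarrow> even k \<and> 2 \<le> k \<and> k \<le> 2*m-2"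
proof
  assume "even k \<and> 2 \<le> k \<and> k \<le> 2*m-2"
  then obtain t where "k = 2*t" "1 \<le> t" "t \<le> m - 1" by (auto elim!: evenE)
  then show "k \<in> (\<lambda>i. 2 * i) ` {1..m-1}" by auto
qed auto

lemma pmf_UO: assumes "m \<ge> 1" shows "pmf (U_O m) = (\<lambda>k. real (cO m k) / real m)"
proof
  fix k
  have c: "card ((\<lambda>i. 2 * i + 1) ` {..<m}) = m"
    by (subst card_image) (auto simp: inj_on_def)
  have ne: "(\<lambda>i. 2 * i + 1) ` {..<m} \<noteq> {}" using assms by (simp add: lessThan_empty_iff)
  show "pmf (U_O m) k = real (cO m k) / real m"
    unfolding U_O_def using ne c mem_O[of k m] by (simp add: indicator_def cO_def)
qed

lemma pmf_UE: "pmf (U_E m) = (\<lambda>k. real (cE m k) / real (m+1))"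
proof
  fix k
  have c: "card ((\<lambda>i. 2 * i) ` {..m}) = m+1"
    by (subst card_image) (auto simp: inj_on_def)
  have ne: "(\<lambda>i. 2 * i) ` {..m} \<noteq> {}" by auto
  show "pmf (U_E m) k = real (cE m k) / real (m+1)"
    unfolding U_E_def using ne c mem_E[of k m] by (simp add: indicator_def cE_def)
qed

lemma pmf_UU: assumes "m \<ge> 2" shows "pmf (U_O_up1 m) = (\<lambda>k. real (cU m k) / (real m - 1))"
proof
  fix k
  have c: "card ((\<lambda>i. 2 * i) ` {1..m-1}) = m-1"
    by (subst card_image) (auto simp: inj_on_def)
  have ne: "(\<lambda>i. 2 * i) ` {1..m-1} \<noteq> {}" using assms by auto
  have r: "real (m - 1) = real m - 1" using assms by simp
  show "pmf (U_O_up1 m) k = real (cU m k) / (real m - 1)"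
    unfolding U_O_up1_def using ne c r mem_U[of k m] by (simp add: indicator_def cU_def)
qed

lemma Wmass_eq: assumes "1 \<le> j" "j + 1 \<le> m" shows "W_mass j m k = real (cW j m k) / (2 * real m)"
proof -
  have e1: "(\<exists>i. 1 \<le> i \<and> i \<le> j - 1 \<and> k = 2 * i) \<longleftrightarrow> (k \<noteq> 0 \<and> even k \<and> k < 2*j)"
    using assms by (auto elim!: evenE)
  have e2: "(\<exists>i. j + 1 \<le> i \<and> i \<le> m \<and> k = 2 * i - 1) \<longleftrightarrow> (odd k \<and> 2*j < k \<and> k < 2*m)"
  proof
    assume "\<exists>i. j + 1 \<le> i \<and> i \<le> m \<and> k = 2 * i - 1" then show "odd k \<and> 2*j < k \<and> k < 2*m"
      by auto
  next
    assume "odd k \<and> 2*j < k \<and> k < 2*m"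
    then obtain t where t: "k = 2*t+1" "2*j < k" "k < 2*m" by (auto elim!: oddE)
    then show "\<exists>i. j + 1 \<le> i \<and> i \<le> m \<and> k = 2 * i - 1" by (intro exI[of _ "t+1"]) auto
  qed
  show ?thesis unfolding W_mass_def cW_def e1 e2 using assms by auto
qed

lemma sum_cW: assumes "1 \<le> j" "j + 1 \<le> m" shows "(\<Sum>k\<in>{..2*m}. cW j m k) = 2*m"
proof -
  have ne: "Suc (2*m) \<noteq> 2*j"
  proof
    assume "Suc (2*m) = 2*j"
    then have "even (Suc (2*m))" by (metis dvd_triv_left)
    then show False by simp
  qed
  then have "TT (cW j m) (2*m+1) = 4*m" using TT_W[OF assms, of "2*m+1"] by simp
  moreover have "cW j m (2*m+1) = 0" unfolding cW_def using ne by auto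
  moreover have "{..2*m} = {..<2*m+1}" by auto
  ultimately show ?thesis unfolding TT_def by simp
qed

lemma pmf_W: assumes "1 \<le> j" "j + 1 \<le> m" shows "pmf (W j m) = (\<lambda>k. real (cW j m k) / (2 * real m))"
proof -
  have nn: "\<And>k. 0 \<le> W_mass j m k" using Wmass_eq[OF assms] by simp
  have "(\<integral>\<^sup>+k. ennreal (W_mass j m k) \<partial>count_space UNIV) = (\<Sum>k\<in>{..2*m}. ennreal (W_mass j m k))"
    by (rule nn_integral_count_space') (use assms in \<open>auto simp: Wmass_eq[OF assms] cW_def\<close>)
  also have "\<dots> = ennreal (\<Sum>k\<in>{..2*m}. W_mass j m k)"
    using nn by (simp add: sum_ennreal)
  also have "(\<Sum>k\<in>{..2*m}. W_mass j m k) = real (\<Sum>k\<in>{..2*m}. cW j m k) / (2 * real m)"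
    by (simp add: Wmass_eq[OF assms] sum_divide_distrib)
  also have "\<dots> = 1" using sum_cW[OF assms] assms by simp
  finally have "(\<integral>\<^sup>+k. ennreal (W_mass j m k) \<partial>count_space UNIV) = 1" by simp
  then have "pmf (embed_pmf (W_mass j m)) k = W_mass j m k" for k
    using pmf_embed_pmf[where f="W_mass j m", OF nn] by blast
  then show ?thesis unfolding W_def by (auto simp: Wmass_eq[OF assms] fun_eq_iff)
qed

lemma int_bdd: "(\<And>x. 0 \<le> f x \<and> f x \<le> 1) \<Longrightarrow> integrable (measure_pmf p) (f :: nat \<Rightarrow> real)"
  by (rule measure_pmf.integrable_const_bound[where B=1]) auto

lemma sum_pmf_le1: fixes Y :: "nat pmf" shows "0 \<le> (\<Sum>k<x. pmf Y k) \<and> (\<Sum>k<x. pmf Y k) \<le> 1"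
proof -
  have "(\<Sum>k<x. pmf Y k) = measure_pmf.prob Y {..<x}"
    by (rule measure_measure_pmf_finite[symmetric]) simp
  then show ?thesis by (simp add: sum_nonneg)
qed

lemma payoff_eq:
  assumes "strategy X'"
  shows "allpay_payoff v X' Y = measure_pmf.expectation X' (\<lambda>x. v * mc (pmf Y) x - real x)"
proof -
  have g: "prob_gt X' Y = measure_pmf.expectation X' (\<lambda>a. \<Sum>k<a. pmf Y k)"
    unfolding prob_gt_def prob_pair
    by (rule Bochner_Integration.integral_cong) (auto simp: measure_measure_pmf_finite[symmetric] lessThan_def)
  have e: "prob_eq X' Y = measure_pmf.expectation X' (\<lambda>a. pmf Y a)"
    unfolding prob_eq_def prob_pair
    by (rule Bochner_Integration.integral_cong) (auto simp: measure_pmf_single[symmetric] eq_commute)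
  have i1: "integrable (measure_pmf X') (\<lambda>a. \<Sum>k<a. pmf Y k)" by (rule int_bdd) (rule sum_pmf_le1)
  have i2: "integrable (measure_pmf X') (\<lambda>a. pmf Y a)" by (rule int_bdd) (simp add: pmf_le_1)
  have i3: "integrable (measure_pmf X') real" using assms unfolding strategy_def .
  have "measure_pmf.expectation X' (\<lambda>x. v * mc (pmf Y) x - real x)
      = measure_pmf.expectation X' (\<lambda>x. v * (\<Sum>k<x. pmf Y k) + v / 2 * pmf Y x - real x)"
    unfolding mc_def by (simp add: algebra_simps)
  also have "\<dots> = v * prob_gt X' Y + v / 2 * prob_eq X' Y - mean X'"
    unfolding g e mean_def using i1 i2 i3 by simp
  finally show ?thesis unfolding allpay_payoff_def by simp
qed

lemma integrable_g: "strategy X' \<Longrightarrow> integrable (measure_pmf X') (\<lambda>x. v * mc (pmf Y) x - real x)"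
proof -
  assume "strategy X'"
  then have i3: "integrable (measure_pmf X') real" unfolding strategy_def .
  have i1: "integrable (measure_pmf X') (\<lambda>a. \<Sum>k<a. pmf Y k)" by (rule int_bdd) (rule sum_pmf_le1)
  have i2: "integrable (measure_pmf X') (\<lambda>a. pmf Y a)" by (rule int_bdd) (simp add: pmf_le_1)
  show ?thesis unfolding mc_def using i1 i2 i3 by (simp add: algebra_simps)
qed

lemma best_resp:
  assumes "strategy X'" "strategy X" "\<And>x. v * mc (pmf Y) x - real x \<le> K"
    "\<And>x. x \<in> set_pmf X \<Longrightarrow> v * mc (pmf Y) x - real x = K"
  shows "allpay_payoff v X' Y \<le> allpay_payoff v X Y"
proof -
  have "allpay_payoff v X' Y \<le> measure_pmf.expectation X' (\<lambda>x. K)"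
    unfolding payoff_eq[OF assms(1)]
    by (rule integral_mono) (auto intro: integrable_g[OF assms(1)] assms(3))
  also have "\<dots> = K" by simp
  also have "K = measure_pmf.expectation X (\<lambda>x. v * mc (pmf Y) x - real x)"
    by (subst integral_cong_AE[where g="\<lambda>x. K"]) (auto simp: AE_measure_pmf_iff assms(4))
  finally show ?thesis unfolding payoff_eq[OF assms(2)] .
qed

lemma rTT_Z: "real (TT cZ x) = (if x = 0 then 1 else 2)" by (simp add: TT_Z)
lemma rTT_O1: "1 \<le> x \<Longrightarrow> real (TT (cO m) x) \<le> real x" by (simp add: TT_O)
lemma rTT_O2: "x \<le> 2*m \<Longrightarrow> real (TT (cO m) x) = real x" by (simp add: TT_O)
lemma rTT_E1: "real (TT (cE m) x) \<le> real x + 1" by (simp add: TT_E)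
lemma rTT_E2: "x \<le> 2*m+1 \<Longrightarrow> real (TT (cE m) x) = real x + 1" by (simp add: TT_E)
lemma rTT_U0: "m \<ge> 2 \<Longrightarrow> real (TT (cU m) 0) = 0" by (simp add: TT_U)
lemma rTT_U1: assumes "m \<ge> 2" "1 \<le> x" shows "real (TT (cU m) x) \<le> real x - 1"
proof (cases "x \<le> 2*m-1")
  case True then show ?thesis using assms by (simp add: TT_U of_nat_diff)
next
  case False
  then have "2*m-2 \<le> x - 1" by simp
  then have "real (2*m-2) \<le> real (x - 1)" by (simp only: of_nat_le_iff)
  then show ?thesis using assms False by (simp add: TT_U of_nat_diff)
qed
lemma rTT_U2: "m \<ge> 2 \<Longrightarrow> 1 \<le> x \<Longrightarrow> x \<le> 2*m-1 \<Longrightarrow> real (TT (cU m) x) = real x - 1" by (simp add: TT_U of_nat_diff)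
lemma rTT_W0: "1 \<le> j \<Longrightarrow> j + 1 \<le> m \<Longrightarrow> real (TT (cW j m) 0) = 1" by (simp add: TT_W)
lemma rTT_W1: "1 \<le> j \<Longrightarrow> j + 1 \<le> m \<Longrightarrow> 1 \<le> x \<Longrightarrow> real (TT (cW j m) x) \<le> 2 * real x"
  by (simp add: TT_W of_nat_diff)
lemma rTT_W2: "1 \<le> j \<Longrightarrow> j + 1 \<le> m \<Longrightarrow> odd x \<Longrightarrow> x \<le> 2*m \<Longrightarrow> real (TT (cW j m) x) = 2 * real x"
  by (auto simp: TT_W dest: odd_pos)

lemma mcY_m2:
  fixes Y :: "nat pmf"
  assumes m2: "m \<ge> 2"
    and pY: "\<forall>k. pmf Y k = (1 - b / real m) * indicator {0} k +
                 b / real m * (lO * pmf (U_O m) k + lE * pmf (U_E m) k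
                   + lU * pmf (U_O_up1 m) k + (\<Sum>j=1..m-1. lam j * pmf (W j m) k))"
  shows "mc (pmf Y) x = (1 - b / real m) * (real (TT cZ x) / (2*1)) +
      b / real m * (lO * (real (TT (cO m) x) / (2 * real m)) + lE * (real (TT (cE m) x) / (2 * real (m+1)))
       + lU * (real (TT (cU m) x) / (2 * (real m - 1))) + (\<Sum>j=1..m-1. lam j * (real (TT (cW j m) x) / (2 * (2 * real m)))))"
proof -
  have "pmf Y = (\<lambda>k. (1 - b / real m) * (real (cZ k) / 1) +
                 b / real m * (lO * (real (cO m k) / real m) + lE * (real (cE m k) / real (m+1))
                   + lU * (real (cU m k) / (real m - 1)) + (\<Sum>j=1..m-1. lam j * (real (cW j m k) / (2 * real m)))))"
  proof
    fix k
    have s: "(\<Sum>j=1..m-1. lam j * pmf (W j m) k) = (\<Sum>j=1..m-1. lam j * (real (cW j m k) / (2 * real m)))"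
      by (rule sum.cong) (use m2 in \<open>auto simp: pmf_W\<close>)
    show "pmf Y k = (1 - b / real m) * (real (cZ k) / 1) +
                 b / real m * (lO * (real (cO m k) / real m) + lE * (real (cE m k) / real (m+1))
                   + lU * (real (cU m k) / (real m - 1)) + (\<Sum>j=1..m-1. lam j * (real (cW j m k) / (2 * real m))))"
      using pY[rule_format, of k] m2 unfolding s
      by (simp add: s pmf_UO pmf_UE pmf_UU cZ_def indicator_def)
  qed
  then show ?thesis
    by (simp only: mc_add mc_cmult mc_sum mc_nat)
qed

lemma lin_aux: fixes P Q E S U :: real assumes "P*(S+U) \<le> Q/2" shows "Q/2 + P*(E+S) \<le> Q + P*(E-U)"
  using assms by (simp add: algebra_simps)

lemma p1_m2:
  fixes Y :: "nat pmf"
  assumes m2: "m \<ge> 2" and b0: "0 < b" and bm: "b \<le> real m" and v1: "v1 > 0"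
    and lO: "lO \<ge> 0" and lE: "lE \<ge> 0" and lU: "lU \<ge> 0" and lam: "\<forall>j\<in>{1..m-1}. lam j \<ge> 0"
    and sum1: "lO + lE + lU + (\<Sum>j=1..m-1. lam j) = 1"
    and Seq: "lO / real m + lE / (real m + 1) + lU / (real m - 1)
            + 1 / real m * (\<Sum>j=1..m-1. lam j) = 2 * real m / (b * v1)"
    and cnd: "b > real m - 1 \<longrightarrow>
            1 / (2 * real m) * (\<Sum>j=1..m-1. lam j) + lU / (real m - 1) \<le> (real m - b) / b"
    and pY: "\<forall>k. pmf Y k = (1 - b / real m) * indicator {0} k +
                 b / real m * (lO * pmf (U_O m) k + lE * pmf (U_E m) k
                   + lU * pmf (U_O_up1 m) k + (\<Sum>j=1..m-1. lam j * pmf (W j m) k))"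
  shows "\<exists>K. (\<forall>x. v1 * mc (pmf Y) x - real x \<le> K) \<and> (\<forall>x. odd x \<and> x < 2*m \<longrightarrow> v1 * mc (pmf Y) x - real x = K)"
proof -
  define s where "s = (\<Sum>j=1..m-1. lam j)"
  define M where "M = real m"
  have M2: "M \<ge> 2" using m2 unfolding M_def by simp
  have nz: "M \<noteq> 0" "M + 1 \<noteq> 0" "M - 1 \<noteq> 0" using M2 by auto
  have s0: "s \<ge> 0" unfolding s_def using lam by (intro sum_nonneg) auto
  have bM: "b \<le> M" using bm unfolding M_def .
  have jr: "\<And>j. j \<in> {1..m-1} \<Longrightarrow> 1 \<le> j \<and> j + 1 \<le> m" using m2 by auto
  have F: "mc (pmf Y) x = (1 - b / M) * (real (TT cZ x) / 2) +
      b / M * (lO * (real (TT (cO m) x) / (2 * M)) + lE * (real (TT (cE m) x) / (2 * (M+1)))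
       + lU * (real (TT (cU m) x) / (2 * (M - 1))) + (\<Sum>j=1..m-1. lam j * (real (TT (cW j m) x) / (2 * (2 * M)))))" for x
    using mcY_m2[OF m2 pY, of x] unfolding M_def by simp
  define L0 where "L0 = (1 - b/M) + b/M * (lE/(2*(M+1)) - lU/(2*(M-1)))"
  define L where "L x = (1-b/M) + b/M*(lO*(x/(2*M)) + lE*((x+1)/(2*(M+1))) + lU*((x-1)/(2*(M-1))) + s*(x/(2*M)))" for x :: real
  have LS: "L x = L0 + b/M*(x/2)*(lO / M + lE / (M + 1) + lU / (M - 1) + 1 / M * s)" for x
  proof -
    have e1: "lE*((x+1)/(2*(M+1))) = lE/(2*(M+1)) + lE*(x/(2*(M+1)))" by (simp add: add_divide_distrib algebra_simps)
    have e2: "lU*((x-1)/(2*(M-1))) = lU*(x/(2*(M-1))) - lU/(2*(M-1))" by (simp add: diff_divide_distrib algebra_simps)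
    have e3: "b/M*(x/2)*(lO / M + lE / (M + 1) + lU / (M - 1) + 1 / M * s)
       = b/M*(lO*(x/(2*M)) + lE*(x/(2*(M+1))) + lU*(x/(2*(M-1))) + s*(x/(2*M)))"
    proof -
      have "(x/2)*(lO / M + lE / (M + 1) + lU / (M - 1) + 1 / M * s) = lO*(x/(2*M)) + lE*(x/(2*(M+1))) + lU*(x/(2*(M-1))) + s*(x/(2*M))"
        by (simp add: ring_distribs mult.commute)
      then show ?thesis by (metis mult.assoc)
    qed
    show ?thesis unfolding L_def L0_def e1 e2 e3 by (simp add: algebra_simps)
  qed
  have Lx: "v1 * L x - x = v1 * L0" for x
  proof -
    have "lO / M + lE / (M + 1) + lU / (M - 1) + 1 / M * s = 2 * M / (b * v1)"
      using Seq unfolding M_def s_def .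
    then have "L x = L0 + b/M*(x/2)*(2 * M / (b * v1))" using LS by simp
    also have "\<dots> = L0 + x / v1" using M2 b0 v1 by (simp add: field_simps)
    finally show ?thesis using v1 by (simp add: field_simps)
  qed
  have Wle: "(\<Sum>j=1..m-1. lam j * (real (TT (cW j m) x) / (2 * (2 * M)))) \<le> s * (real x / (2*M))" if "1 \<le> x" for x
  proof -
    have "(\<Sum>j=1..m-1. lam j * (real (TT (cW j m) x) / (2 * (2 * M)))) \<le> (\<Sum>j=1..m-1. lam j * (real x / (2*M)))"
    proof (rule sum_mono)
      fix j assume j: "j \<in> {1..m-1}"
      have "real (TT (cW j m) x) / (2 * (2 * M)) \<le> (2 * real x) / (2 * (2 * M))"
        using rTT_W1[of j m x] jr[OF j] that M2 by (intro divide_right_mono) auto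
      also have "\<dots> = real x / (2*M)" by simp
      finally show "lam j * (real (TT (cW j m) x) / (2 * (2 * M))) \<le> lam j * (real x / (2*M))"
        using lam j by (intro mult_left_mono) auto
    qed
    also have "\<dots> = s * (real x / (2*M))" unfolding s_def by (rule sum_distrib_right[symmetric])
    finally show ?thesis .
  qed
  have Weq: "(\<Sum>j=1..m-1. lam j * (real (TT (cW j m) x) / (2 * (2 * M)))) = s * (real x / (2*M))"
    if "odd x" "x \<le> 2*m" for x
  proof -
    have "(\<Sum>j=1..m-1. lam j * (real (TT (cW j m) x) / (2 * (2 * M)))) = (\<Sum>j=1..m-1. lam j * (real x / (2*M)))"
      by (rule sum.cong) (use rTT_W2 jr that in auto)
    also have "\<dots> = s * (real x / (2*M))" unfolding s_def by (rule sum_distrib_right[symmetric])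
    finally show ?thesis .
  qed
  have W0: "(\<Sum>j=1..m-1. lam j * (real (TT (cW j m) 0) / (2 * (2 * M)))) = s * (1 / (4*M))"
  proof -
    have "(\<Sum>j=1..m-1. lam j * (real (TT (cW j m) 0) / (2 * (2 * M)))) = (\<Sum>j=1..m-1. lam j * (1 / (4*M)))"
      by (rule sum.cong) (use rTT_W0 jr in auto)
    also have "\<dots> = s * (1 / (4*M))" unfolding s_def by (rule sum_distrib_right[symmetric])
    finally show ?thesis .
  qed
  have FleL: "mc (pmf Y) x \<le> L (real x)" if x1: "1 \<le> x" for x
  proof -
    have a: "lO * (real (TT (cO m) x) / (2 * M)) \<le> lO * (real x / (2 * M))"
      using rTT_O1[OF x1, of m] M2 lO by (intro mult_left_mono divide_right_mono) auto
    have c: "lE * (real (TT (cE m) x) / (2 * (M+1))) \<le> lE * ((real x + 1) / (2 * (M+1)))"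
      using rTT_E1[of m x] M2 lE by (intro mult_left_mono divide_right_mono) auto
    have d: "lU * (real (TT (cU m) x) / (2 * (M-1))) \<le> lU * ((real x - 1) / (2 * (M-1)))"
      using rTT_U1[OF m2 x1] M2 lU by (intro mult_left_mono divide_right_mono) auto
    have z: "real (TT cZ x) = 2" using x1 by (simp add: rTT_Z)
    have "b / M * (lO * (real (TT (cO m) x) / (2 * M)) + lE * (real (TT (cE m) x) / (2 * (M+1)))
       + lU * (real (TT (cU m) x) / (2 * (M - 1))) + (\<Sum>j=1..m-1. lam j * (real (TT (cW j m) x) / (2 * (2 * M)))))
       \<le> b / M * (lO * (real x / (2 * M)) + lE * ((real x + 1) / (2 * (M+1)))
       + lU * ((real x - 1) / (2 * (M-1))) + s * (real x / (2*M)))"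
      using b0 M2 by (intro mult_left_mono[OF add_mono[OF add_mono[OF add_mono[OF a c] d] Wle[OF x1]]]) auto
    then show ?thesis unfolding F L_def z by simp
  qed
  have FeqL: "mc (pmf Y) x = L (real x)" if x1: "odd x" "x < 2*m" for x
  proof -
    have x0: "1 \<le> x" "x \<le> 2*m" "x \<le> 2*m+1" "x \<le> 2*m-1" using x1 by (auto dest: odd_pos)
    have z: "real (TT cZ x) = 2" using x0 by (simp add: rTT_Z)
    show ?thesis unfolding F L_def z rTT_O2[OF x0(2)] rTT_E2[OF x0(3)] rTT_U2[OF m2 x0(1) x0(4)]
      Weq[OF x1(1) x0(2)] by simp
  qed
  have cond': "s/(2*M) + lU/(M-1) \<le> (M-b)/b"
  proof (cases "b > M - 1")
    case True then show ?thesis using cnd unfolding s_def M_def by simp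
  next
    case False
    have "s/(2*M) \<le> s/(M-1)" using s0 M2 by (intro divide_left_mono) auto
    moreover have "s/(M-1) + lU/(M-1) = (s+lU)/(M-1)" by (simp add: add_divide_distrib)
    moreover have "(s+lU)/(M-1) \<le> 1/(M-1)" using sum1 lO lE M2 unfolding s_def by (intro divide_right_mono) auto
    moreover have "1/(M-1) \<le> (M-b)/b"
    proof -
      have h1: "1 \<le> M - b" using False by simp
      have h2: "(M-1)*1 \<le> (M-1)*(M-b)" using h1 M2 by (intro mult_left_mono) auto
      then have h2: "M-1 \<le> (M-1)*(M-b)" by simp
      have h3: "(M-b)*(M-1) = (M-1)*(M-b)" by (simp add: mult.commute)
      have "b \<le> (M - b) * (M - 1)" using h2 h3 False by linarith
      then show ?thesis using b0 M2 by (simp add: divide_simps)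
    qed
    ultimately show ?thesis by linarith
  qed
  have F0: "mc (pmf Y) 0 \<le> L0"
  proof -
    have e: "mc (pmf Y) 0 = (1 - b/M)/2 + b/M*(lE/(2*(M+1)) + s/(4*M))"
      unfolding F rTT_Z W0 using rTT_U0[OF m2] by (simp add: TT_O TT_E)
    have q1: "b/M*(s/(4*M)) = (b/(2*M))*(s/(2*M))" by simp
    have q2: "b/M*(lU/(2*(M-1))) = (b/(2*M))*(lU/(M-1))" by simp
    have "b/M*(s/(4*M) + lU/(2*(M-1))) = (b/(2*M)) * (s/(2*M) + lU/(M-1))"
      unfolding distrib_left q1 q2 ..
    also have "\<dots> \<le> (b/(2*M)) * ((M-b)/b)" using cond' b0 M2 by (intro mult_left_mono) auto
    also have "\<dots> = (1 - b/M)/2" using b0 M2 by (simp add: field_simps)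
    finally have key: "b/M*(s/(4*M) + lU/(2*(M-1))) \<le> (1 - b/M)/2" .
    moreover have "b/M*(lE/(2*(M+1)) + s/(4*M)) = b/M*(lE/(2*(M+1))) + b/M*(s/(4*M))" by (rule distrib_left)
    moreover have "b/M*(lE/(2*(M+1)) - lU/(2*(M-1))) = b/M*(lE/(2*(M+1))) - b/M*(lU/(2*(M-1)))" by (rule right_diff_distrib)
    moreover have "b/M*(s/(4*M) + lU/(2*(M-1))) = b/M*(s/(4*M)) + b/M*(lU/(2*(M-1)))" by (rule distrib_left)
    show ?thesis unfolding e L0_def using key by (rule lin_aux)
  qed
  show ?thesis
  proof (intro exI[of _ "v1 * L0"] conjI allI impI)
    fix x
    show "v1 * mc (pmf Y) x - real x \<le> v1 * L0"
    proof (cases "x = 0")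
      case True then show ?thesis using F0 v1 by simp
    next
      case False
      then have "mc (pmf Y) x \<le> L (real x)" using FleL by simp
      then have "v1 * mc (pmf Y) x \<le> v1 * L (real x)" using v1 by simp
      then show ?thesis using Lx[of "real x"] by linarith
    qed
  next
    fix x assume "odd x \<and> x < 2*m"
    then show "v1 * mc (pmf Y) x - real x = v1 * L0" using FeqL Lx by simp
  qed
qed

lemma inv_le_mult: "(v::real) > 0 \<Longrightarrow> 1/v \<le> t \<Longrightarrow> 1 \<le> v * t"
  by (simp add: field_simps)
lemma le_inv_mult: "(v::real) > 0 \<Longrightarrow> t \<le> 1/v \<Longrightarrow> v * t \<le> 1"
  by (simp add: field_simps)

lemma p1_m1:
  fixes Y :: "nat pmf"
  assumes b0: "0 < b" and b1: "b \<le> 1" and v1: "v1 > 0"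
    and lO: "lO \<ge> 0" and lE: "lE \<ge> 0" and s1: "lO + lE = 1"
    and c1: "lE / 2 \<ge> 1 - 2 / (b * v1)" and c2: "lE / 2 \<le> 1 / b - 2 / (b * v1)"
    and pY: "\<forall>k. pmf Y k = (1 - b) * indicator {0} k + b * (lO * pmf (U_O 1) k + lE * pmf (U_E 1) k)"
  shows "\<forall>x. v1 * mc (pmf Y) x - real x \<le> v1 * mc (pmf Y) 1 - 1"
proof -
  have "pmf Y = (\<lambda>k. (1 - b) * (real (cZ k) / 1) + b * (lO * (real (cO 1 k) / 1) + lE * (real (cE 1 k) / 2)))"
  proof
    fix k show "pmf Y k = (1 - b) * (real (cZ k) / 1) + b * (lO * (real (cO 1 k) / 1) + lE * (real (cE 1 k) / 2))"
      using pY[rule_format, of k] pmf_UO[of 1] pmf_UE[of 1] by (simp add: cZ_def indicator_def)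
  qed
  then have F: "mc (pmf Y) x = (1 - b) * (real (TT cZ x) / (2*1)) + b * (lO * (real (TT (cO 1) x) / (2*1)) + lE * (real (TT (cE 1) x) / (2*2)))" for x
    by (simp only: mc_add mc_cmult mc_nat)
  have F0: "mc (pmf Y) 0 = (1 - b)/2 + b*(lE/4)" unfolding F by (simp add: TT_Z TT_O TT_E)
  have F1: "mc (pmf Y) 1 = (1 - b) + b*(lO/2 + lE/2)" unfolding F by (simp add: TT_Z TT_O TT_E)
  have F2: "mc (pmf Y) 2 = (1 - b) + b*(lO + 3*lE/4)" unfolding F by (simp add: TT_Z TT_O TT_E)
  have F3: "mc (pmf Y) x = 1" if "x \<ge> 3" for x
  proof -
    have "mc (pmf Y) x = (1 - b) + b*(lO + lE)" unfolding F using that by (simp add: TT_Z TT_O TT_E)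
    then show ?thesis using s1 by simp
  qed
  have d2: "b*(lE/2) \<le> 1 - 2/v1"
  proof -
    have "b*(lE/2) \<le> b*(1 / b - 2 / (b * v1))" using c2 b0 by (intro mult_left_mono) auto
    also have "\<dots> = 1 - 2/v1" using b0 v1 by (simp add: field_simps)
    finally show ?thesis .
  qed
  have d1: "b*(lE/2) \<ge> b - 2/v1"
  proof -
    have "b*(lE/2) \<ge> b*(1 - 2 / (b * v1))" using c1 b0 by (intro mult_left_mono) auto
    moreover have "b*(1 - 2 / (b * v1)) = b - 2/v1" using b0 v1 by (simp add: field_simps)
    ultimately show ?thesis by simp
  qed
  have i: "1 \<le> v1 * (1/2 - b*lE/4)" using d2 by (intro inv_le_mult[OF v1]) auto
  have ii: "v1 * (b/2 - b*lE/4) \<le> 1" using d1 by (intro le_inv_mult[OF v1]) auto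
  have iii: "v1 * (b/2) \<le> 2"
  proof -
    have "b*(lE/2) \<le> b*(1/2)" using b0 lO s1 by (intro mult_left_mono) auto
    then have "b - 2/v1 \<le> b/2" using d1 by simp
    then have "b/2 \<le> 2 * (1/v1)" by simp
    then have "v1 * (b/2) \<le> v1 * (2 * (1/v1))" using v1 by (intro mult_left_mono) auto
    then show ?thesis using v1 by simp
  qed
  have lOe: "lO = 1 - lE" using s1 by linarith
  have e1: "mc (pmf Y) 1 - mc (pmf Y) 0 = 1/2 - b*lE/4" unfolding F0 F1 lOe by (simp add: field_simps)
  have e2: "mc (pmf Y) 2 - mc (pmf Y) 1 = b/2 - b*lE/4" unfolding F2 F1 lOe by (simp add: field_simps)
  have h: "lO/2 + lE/2 = 1/2" using s1 by linarith
  have e3: "1 - mc (pmf Y) 1 = b/2" unfolding F1 h by simp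
  show ?thesis
  proof
    fix x :: nat
    consider "x = 0" | "x = 1" | "x = 2" | "x \<ge> 3" by linarith
    then show "v1 * mc (pmf Y) x - real x \<le> v1 * mc (pmf Y) 1 - 1"
    proof cases
      case 1
      have "v1 * (mc (pmf Y) 1 - mc (pmf Y) 0) \<ge> 1" using i e1 by simp
      then show ?thesis using 1 by (simp add: algebra_simps)
    next
      case 2 then show ?thesis by simp
    next
      case 3
      have "v1 * (mc (pmf Y) 2 - mc (pmf Y) 1) \<le> 1" using ii e2 by simp
      then show ?thesis using 3 by (simp add: algebra_simps)
    next
      case 4
      have "v1 * (1 - mc (pmf Y) 1) \<le> 2" unfolding e3 using iii by simp
      then show ?thesis using 4 F3[OF 4] by (simp add: algebra_simps)
    qed
  qed
qed

theorem lemma3: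
  fixes v1 v2 b :: real and m :: nat and X Y :: "nat pmf"
  assumes v: "v1 \<ge> v2" "v2 > 0"
    and m1: "m \<ge> 1"
    and b: "0 < b" "b \<le> real m"
    and strat: "strategy X" "strategy Y"
    and meanX: "mean X = real m" and meanY: "mean Y = b"
    and mv: "real m = v2 / 2"
    and lotto: "lotto_NE (real m) b X Y"
    and X_def: "X = U_O m"
    and Y_form:
      "(m = 1 \<and> (\<exists>lO lE :: real. lO \<ge> 0 \<and> lE \<ge> 0 \<and> lO + lE = 1 \<and>
          lE / 2 \<ge> 1 - 2 / (b * v1) \<and> lE / 2 \<le> 1 / b - 2 / (b * v1) \<and>
          (\<forall>k. pmf Y k = (1 - b / real m) * indicator {0} k +
                 b / real m * (lO * pmf (U_O 1) k + lE * pmf (U_E 1) k))))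
       \<or>
       (m \<ge> 2 \<and> (\<exists>(lO::real) (lE::real) (lU::real) (lam :: nat \<Rightarrow> real).
          lO \<ge> 0 \<and> lE \<ge> 0 \<and> lU \<ge> 0 \<and> (\<forall>j\<in>{1..m-1}. lam j \<ge> 0) \<and>
          lO + lE + lU + (\<Sum>j=1..m-1. lam j) = 1 \<and>
          lE / (real m + 1) + 1 / (2 * real m) * (\<Sum>j=1..m-1. lam j)
            \<le> real m / b * (1 - v2 / v1) \<and>
          lO / real m + lE / (real m + 1) + lU / (real m - 1)
            + 1 / real m * (\<Sum>j=1..m-1. lam j) = 2 * real m / (b * v1) \<and>
          (b > real m - 1 \<longrightarrow>
            1 / (2 * real m) * (\<Sum>j=1..m-1. lam j) + lU / (real m - 1) \<le> (real m - b) / b) \<and>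
          (\<forall>k. pmf Y k = (1 - b / real m) * indicator {0} k +
                 b / real m * (lO * pmf (U_O m) k + lE * pmf (U_E m) k
                   + lU * pmf (U_O_up1 m) k + (\<Sum>j=1..m-1. lam j * pmf (W j m) k)))))"
  shows "allpay_NE v1 v2 X Y"
proof -
  have v2m: "v2 = 2 * real m" using mv by simp
  have pX: "pmf X = (\<lambda>k. real (cO m k) / real m)" using X_def pmf_UO[OF m1] by simp
  have setX: "set_pmf X = {x. odd x \<and> x < 2*m}"
  proof -
    have ne: "(\<lambda>i. 2 * i + 1) ` {..<m} \<noteq> {}" using m1 by (simp add: lessThan_empty_iff)
    show ?thesis unfolding X_def U_O_def using ne mem_O by auto
  qed
  have mcX: "mc (pmf X) y = real (TT (cO m) y) / (2 * real m)" for y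
    unfolding pX by (rule mc_nat)
  have supY: "pmf Y k = 0" if k: "k > 2*m" for k
  proof -
    have z: "indicator {0} k = (0::real)" using k by auto
    have o: "pmf (U_O m) k = 0" using k pmf_UO[OF m1] by (simp add: cO_def)
    have e: "pmf (U_E m) k = 0" using k pmf_UE by (simp add: cE_def)
    from Y_form show ?thesis
    proof
      assume "m = 1 \<and> (\<exists>lO lE :: real. lO \<ge> 0 \<and> lE \<ge> 0 \<and> lO + lE = 1 \<and>
          lE / 2 \<ge> 1 - 2 / (b * v1) \<and> lE / 2 \<le> 1 / b - 2 / (b * v1) \<and>
          (\<forall>k. pmf Y k = (1 - b / real m) * indicator {0} k +
                 b / real m * (lO * pmf (U_O 1) k + lE * pmf (U_E 1) k)))"
      then show ?thesis using z o e by auto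
    next
      assume "m \<ge> 2 \<and> (\<exists>(lO::real) (lE::real) (lU::real) (lam :: nat \<Rightarrow> real).
          lO \<ge> 0 \<and> lE \<ge> 0 \<and> lU \<ge> 0 \<and> (\<forall>j\<in>{1..m-1}. lam j \<ge> 0) \<and>
          lO + lE + lU + (\<Sum>j=1..m-1. lam j) = 1 \<and>
          lE / (real m + 1) + 1 / (2 * real m) * (\<Sum>j=1..m-1. lam j)
            \<le> real m / b * (1 - v2 / v1) \<and>
          lO / real m + lE / (real m + 1) + lU / (real m - 1)
            + 1 / real m * (\<Sum>j=1..m-1. lam j) = 2 * real m / (b * v1) \<and>
          (b > real m - 1 \<longrightarrow>
            1 / (2 * real m) * (\<Sum>j=1..m-1. lam j) + lU / (real m - 1) \<le> (real m - b) / b) \<and>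
          (\<forall>k. pmf Y k = (1 - b / real m) * indicator {0} k +
                 b / real m * (lO * pmf (U_O m) k + lE * pmf (U_E m) k
                   + lU * pmf (U_O_up1 m) k + (\<Sum>j=1..m-1. lam j * pmf (W j m) k))))"
      then obtain lO lE lU lam where m2: "m \<ge> 2" and
        pY: "\<forall>k. pmf Y k = (1 - b / real m) * indicator {0} k +
                 b / real m * (lO * pmf (U_O m) k + lE * pmf (U_E m) k
                   + lU * pmf (U_O_up1 m) k + (\<Sum>j=1..m-1. lam j * pmf (W j m) k))" by blast
      have cu: "cU m k = 0" using k unfolding cU_def by auto
      have u: "pmf (U_O_up1 m) k = 0" using cu pmf_UU[OF m2] by simp
      have w: "(\<Sum>j=1..m-1. lam j * pmf (W j m) k) = 0"
      proof (rule sum.neutral, intro ballI)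
        fix j assume j: "j \<in> {1..m-1}"
        then have "cW j m k = 0" using k unfolding cW_def by auto
        moreover have "1 \<le> j" "j + 1 \<le> m" using j m2 by auto
        ultimately show "lam j * pmf (W j m) k = 0" by (simp add: pmf_W)
      qed
      show ?thesis using pY[rule_format, of k] z o e u w by simp
    qed
  qed
  have P2: "allpay_payoff v2 Y' X \<le> allpay_payoff v2 Y X" if "strategy Y'" for Y'
  proof (rule best_resp[OF that strat(2), where K=0])
    fix y
    have "v2 * mc (pmf X) y - real y = real (TT (cO m) y) - real y"
      unfolding mcX v2m using m1 by simp
    then show "v2 * mc (pmf X) y - real y \<le> 0" by (simp add: TT_O)
  next
    fix y assume "y \<in> set_pmf Y"
    then have "y \<le> 2*m" using supY by (auto simp: set_pmf_iff) (meson not_le)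
    moreover have "v2 * mc (pmf X) y - real y = real (TT (cO m) y) - real y"
      unfolding mcX v2m using m1 by simp
    ultimately show "v2 * mc (pmf X) y - real y = 0" by (simp add: TT_O)
  qed
  have v1p: "v1 > 0" using v by simp
  have K: "\<exists>K. (\<forall>x. v1 * mc (pmf Y) x - real x \<le> K) \<and> (\<forall>x. odd x \<and> x < 2*m \<longrightarrow> v1 * mc (pmf Y) x - real x = K)"
    using Y_form
  proof
    assume "m = 1 \<and> (\<exists>lO lE :: real. lO \<ge> 0 \<and> lE \<ge> 0 \<and> lO + lE = 1 \<and>
          lE / 2 \<ge> 1 - 2 / (b * v1) \<and> lE / 2 \<le> 1 / b - 2 / (b * v1) \<and>
          (\<forall>k. pmf Y k = (1 - b / real m) * indicator {0} k +
                 b / real m * (lO * pmf (U_O 1) k + lE * pmf (U_E 1) k)))"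
    then obtain lO lE where m: "m = 1" and h: "lO \<ge> 0" "lE \<ge> 0" "lO + lE = 1"
          "lE / 2 \<ge> 1 - 2 / (b * v1)" "lE / 2 \<le> 1 / b - 2 / (b * v1)" and
          pY: "\<forall>k. pmf Y k = (1 - b / real m) * indicator {0} k +
                 b / real m * (lO * pmf (U_O 1) k + lE * pmf (U_E 1) k)" by blast
    have pY': "\<forall>k. pmf Y k = (1 - b) * indicator {0} k + b * (lO * pmf (U_O 1) k + lE * pmf (U_E 1) k)"
      using pY m by simp
    have b1: "b \<le> 1" using b m by simp
    have A: "\<forall>x. v1 * mc (pmf Y) x - real x \<le> v1 * mc (pmf Y) 1 - 1"
      by (rule p1_m1[OF b(1) b1 v1p h pY'])
    show ?thesis
    proof (intro exI[of _ "v1 * mc (pmf Y) 1 - 1"] conjI allI impI)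
      fix x show "v1 * mc (pmf Y) x - real x \<le> v1 * mc (pmf Y) 1 - 1" using A by blast
    next
      fix x assume "odd x \<and> x < 2*m"
      then have "x = 1" using m by (auto dest: odd_pos)
      then show "v1 * mc (pmf Y) x - real x = v1 * mc (pmf Y) 1 - 1" by simp
    qed
  next
    assume "m \<ge> 2 \<and> (\<exists>(lO::real) (lE::real) (lU::real) (lam :: nat \<Rightarrow> real).
          lO \<ge> 0 \<and> lE \<ge> 0 \<and> lU \<ge> 0 \<and> (\<forall>j\<in>{1..m-1}. lam j \<ge> 0) \<and>
          lO + lE + lU + (\<Sum>j=1..m-1. lam j) = 1 \<and>
          lE / (real m + 1) + 1 / (2 * real m) * (\<Sum>j=1..m-1. lam j)
            \<le> real m / b * (1 - v2 / v1) \<and>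
          lO / real m + lE / (real m + 1) + lU / (real m - 1)
            + 1 / real m * (\<Sum>j=1..m-1. lam j) = 2 * real m / (b * v1) \<and>
          (b > real m - 1 \<longrightarrow>
            1 / (2 * real m) * (\<Sum>j=1..m-1. lam j) + lU / (real m - 1) \<le> (real m - b) / b) \<and>
          (\<forall>k. pmf Y k = (1 - b / real m) * indicator {0} k +
                 b / real m * (lO * pmf (U_O m) k + lE * pmf (U_E m) k
                   + lU * pmf (U_O_up1 m) k + (\<Sum>j=1..m-1. lam j * pmf (W j m) k))))"
    then obtain lO lE lU lam where m2: "m \<ge> 2" and h: "lO \<ge> 0" "lE \<ge> 0" "lU \<ge> 0" "\<forall>j\<in>{1..m-1}. lam j \<ge> 0"
          "lO + lE + lU + (\<Sum>j=1..m-1. lam j) = 1"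
          "lO / real m + lE / (real m + 1) + lU / (real m - 1)
            + 1 / real m * (\<Sum>j=1..m-1. lam j) = 2 * real m / (b * v1)"
          "(b > real m - 1 \<longrightarrow>
            1 / (2 * real m) * (\<Sum>j=1..m-1. lam j) + lU / (real m - 1) \<le> (real m - b) / b)"
          "\<forall>k. pmf Y k = (1 - b / real m) * indicator {0} k +
                 b / real m * (lO * pmf (U_O m) k + lE * pmf (U_E m) k
                   + lU * pmf (U_O_up1 m) k + (\<Sum>j=1..m-1. lam j * pmf (W j m) k))" by blast
    show ?thesis by (rule p1_m2[OF m2 b v1p h])
  qed
  then obtain K where K1: "\<forall>x. v1 * mc (pmf Y) x - real x \<le> K"
    and K2: "\<forall>x. odd x \<and> x < 2*m \<longrightarrow> v1 * mc (pmf Y) x - real x = K" by blast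
  have P1: "allpay_payoff v1 X' Y \<le> allpay_payoff v1 X Y" if "strategy X'" for X'
    by (rule best_resp[OF that strat(1), where K=K]) (use K1 K2 setX in auto)
  show ?thesis unfolding allpay_NE_def using strat P1 P2 by blast
qed

end
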